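(* Let $d\ge1$, $\delta>0$, and let $F:[-\delta,1+\delta]^d\to\mathbb{R}$ be convex, continuous, and continuously differentiable on $(-\delta,1+\delta)^d$. Then for every $\epsilon>0$ there exist $n\ge1$, $t>0$, $\boldsymbol{W}\in\mathbb{R}^{n\times d}$ and $\boldsymbol{a}\in\mathbb{R}^n$ such that $$\sup_{\boldsymbol{x}\in[0,1]^d}\big\|\nabla F(\boldsymbol{x})-\boldsymbol{W}^\top\mathrm{softmax}\big(t(\boldsymbol{W}\boldsymbol{x}+\boldsymbol{a})\big)\big\|<\epsilon .$$ Each such approximator $\boldsymbol{x}\mapsto\boldsymbol{W}^\top\mathrm{softmax}(t(\boldsymbol{W}\boldsymbol{x}+\boldsymbol{a}))$ is the gradient of the convex function $\boldsymbol{x}\mapsto\mathrm{LSE}_t(\{\boldsymbol{w}_i^\top\boldsymbol{x}+a_i\}_{i=1}^n)$, where $\boldsymbol{w}_i^\top$ is the $i$th row of $\boldsymbol{W}$.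
   Context: $\mathrm{softmax}(\boldsymbol{z})_i=e^{z_i}/\sum_j e^{z_j}$ for $\boldsymbol{z}\in\mathbb{R}^n$. For $t>0$ and a finite set $\mathcal{U}\subset\mathbb{R}$, $\mathrm{LSE}_t(\mathcal{U})=\frac1t\log\sum_{u\in\mathcal{U}}e^{tu}$. $\|\cdot\|$ is the Euclidean norm. *)

theory Defs
  imports "HOL-Analysis.Analysis"
begin

text \<open>Vectors in R^n with n varying are encoded as functions nat => _ on indices i < n.
  A matrix W in R^(n x d) is given by its rows W i :: real^'d, i < n.\<close>

definition softmax :: "nat \<Rightarrow> (nat \<Rightarrow> real) \<Rightarrow> nat \<Rightarrow> real" where
  "softmax n z i = exp (z i) / (\<Sum>j<n. exp (z j))"

definition LSE :: "nat \<Rightarrow> real \<Rightarrow> (nat \<Rightarrow> real) \<Rightarrow> real" where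
  "LSE n t u = (1 / t) * ln (\<Sum>i<n. exp (t * u i))"

text \<open>W^T softmax(t(Wx+a)) = sum_i softmax(..)_i * w_i\<close>
definition softmax_approx ::
  "nat \<Rightarrow> real \<Rightarrow> (nat \<Rightarrow> real^'d) \<Rightarrow> (nat \<Rightarrow> real) \<Rightarrow> real^'d \<Rightarrow> real^'d" where
  "softmax_approx n t W a x =
     (\<Sum>i<n. softmax n (\<lambda>k. t * (W k \<bullet> x + a k)) i *\<^sub>R W i)"

definition closed_cube :: "real \<Rightarrow> real \<Rightarrow> (real^'d) set" where
  "closed_cube l u = {x. \<forall>i. l \<le> x $ i \<and> x $ i \<le> u}"

definition open_cube :: "real \<Rightarrow> real \<Rightarrow> (real^'d) set" where
  "open_cube l u = {x. \<forall>i. l < x $ i \<and> x $ i < u}"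

end

theory Submission
  imports Defs
begin

lemma cube_eq: "closed_cube l u = cbox (vec l) (vec u :: real^'d)"
  "open_cube l u = box (vec l) (vec u :: real^'d)"
  by (auto simp: closed_cube_def open_cube_def mem_box_cart)

lemma grad_ineq:
  fixes g :: "'a::real_normed_vector \<Rightarrow> real"
  assumes cv: "convex_on S g" and S: "open S" "convex S" and x: "x \<in> S" and y: "y \<in> S"
    and d: "(g has_derivative (\<lambda>h. L h)) (at x)" and L: "linear L"
  shows "g y \<ge> g x + L (y - x)"
proof -
  define A where "A = (\<lambda>s::real. x + s *\<^sub>R (y - x)) -` S"
  have contl: "continuous_on UNIV (\<lambda>s::real. x + s *\<^sub>R (y - x))"
    by (intro continuous_intros)
  have oA: "open A" unfolding A_def
    by (rule open_vimage[OF S(1) contl])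
  have line: "x + ((1 - u) * s1 + u * s2) *\<^sub>R (y - x) = (1 - u) *\<^sub>R (x + s1 *\<^sub>R (y - x)) + u *\<^sub>R (x + s2 *\<^sub>R (y - x))"
    for u s1 s2 :: real by (simp add: algebra_simps)
  have cA: "convex A" unfolding A_def convex_alt
  proof (intro ballI allI impI)
    fix s1 s2 u :: real
    assume "s1 \<in> (\<lambda>s. x + s *\<^sub>R (y - x)) -` S" "s2 \<in> (\<lambda>s. x + s *\<^sub>R (y - x)) -` S" "0 \<le> u \<and> u \<le> 1"
    then show "(1 - u) *\<^sub>R s1 + u *\<^sub>R s2 \<in> (\<lambda>s. x + s *\<^sub>R (y - x)) -` S"
      using S(2) unfolding convex_alt by (simp add: line)
  qed
  have cvA: "convex_on A (\<lambda>s. g (x + s *\<^sub>R (y - x)))"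
  proof (rule convex_onI[OF _ cA])
    fix u s1 s2 :: real assume "u > 0" "u < 1" "s1 \<in> A" "s2 \<in> A"
    then show "g (x + ((1 - u) *\<^sub>R s1 + u *\<^sub>R s2) *\<^sub>R (y - x)) \<le> (1 - u) * g (x + s1 *\<^sub>R (y - x)) + u * g (x + s2 *\<^sub>R (y - x))"
      using convex_onD[OF cv, of u "x + s1 *\<^sub>R (y - x)" "x + s2 *\<^sub>R (y - x)"]
      by (simp add: A_def line)
  qed
  have 0: "0 \<in> A" "1 \<in> A" using x y by (auto simp: A_def)
  have dl: "((\<lambda>s::real. x + s *\<^sub>R (y - x)) has_derivative (\<lambda>s. s *\<^sub>R (y - x))) (at 0)"
    by (auto intro!: derivative_eq_intros)
  have dg: "(g has_derivative L) (at (x + 0 *\<^sub>R (y - x)))" using d by simp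
  have "((\<lambda>s. g (x + s *\<^sub>R (y - x))) has_derivative (\<lambda>s. L (s *\<^sub>R (y - x)))) (at 0)"
    using has_derivative_compose[OF dl dg] by (simp add: o_def)
  moreover have "(\<lambda>s. L (s *\<^sub>R (y - x))) = (*) (L (y - x))"
    using L by (auto simp: linear_scale mult.commute)
  ultimately have "((\<lambda>s. g (x + s *\<^sub>R (y - x))) has_field_derivative L (y - x)) (at 0)"
    by (simp add: has_field_derivative_def)
  then have "((\<lambda>s. g (x + s *\<^sub>R (y - x))) has_field_derivative L (y - x)) (at 0 within A)"
    by (rule has_field_derivative_at_within)
  from convex_on_imp_above_tangent[OF cvA convex_connected[OF cA] _ 0(2) this]
  show ?thesis using 0 oA by (simp add: interior_open)
qed

lemma sum_exp_pos: "(n::nat) \<ge> 1 \<Longrightarrow> (\<Sum>i<n. exp (f i :: real)) > 0"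
  by (intro sum_pos) (auto simp: lessThan_empty_iff)

lemma LSE_ge:
  assumes "t > 0" "j < n" shows "u j \<le> LSE n t u"
proof -
  have "exp (t * u j) \<le> (\<Sum>i<n. exp (t * u i))"
    using assms by (intro member_le_sum) auto
  then have "ln (exp (t * u j)) \<le> ln (\<Sum>i<n. exp (t * u i))"
    using sum_exp_pos[of n] assms by (subst ln_le_cancel_iff) auto
  then have "t * u j \<le> ln (\<Sum>i<n. exp (t * u i))" by simp
  then show ?thesis using assms(1) by (simp add: LSE_def field_simps)
qed

lemma LSE_le:
  assumes "t > 0" "n \<ge> 1" "\<And>i. i < n \<Longrightarrow> u i \<le> M"
  shows "LSE n t u \<le> M + ln (real n) / t"
proof -
  have "(\<Sum>i<n. exp (t * u i)) \<le> (\<Sum>i<n. exp (t * M))"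
    using assms by (intro sum_mono) auto
  also have "\<dots> = real n * exp (t * M)" by simp
  finally have "ln (\<Sum>i<n. exp (t * u i)) \<le> ln (real n * exp (t * M))"
    using assms(2) sum_exp_pos[of n] by (subst ln_le_cancel_iff) auto
  also have "\<dots> = ln (real n) + t * M" using assms(2) by (simp add: ln_mult)
  finally show ?thesis using assms(1) by (simp add: LSE_def field_simps)
qed

lemma exp_LSE: "t > 0 \<Longrightarrow> n \<ge> 1 \<Longrightarrow> exp (t * LSE n t u) = (\<Sum>i<n. exp (t * u i))"
  using sum_exp_pos[of n] by (simp add: LSE_def)

lemma LSE_convex_comb:
  assumes t: "t > 0" and n: "n \<ge> 1" and l: "0 \<le> l" "l \<le> 1"
  shows "LSE n t (\<lambda>i. (1 - l) * u i + l * v i) \<le> (1 - l) * LSE n t u + l * LSE n t v"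
proof -
  define U where "U = LSE n t u"
  define V where "V = LSE n t v"
  define E where "E = exp (t * ((1 - l) * U + l * V))"
  have eU: "exp (t * U) = (\<Sum>i<n. exp (t * u i))" unfolding U_def using exp_LSE[OF t n] .
  have eV: "exp (t * V) = (\<Sum>i<n. exp (t * v i))" unfolding V_def using exp_LSE[OF t n] .
  have trm: "exp (t * ((1 - l) * u i + l * v i)) \<le> ((1 - l) * (exp (t * u i) / exp (t * U)) + l * (exp (t * v i) / exp (t * V))) * E" for i
  proof -
    have "exp (t * ((1 - l) * u i + l * v i)) = exp ((1 - l) * (t * u i - t * U) + l * (t * v i - t * V)) * E"
      unfolding E_def by (simp add: exp_add[symmetric] algebra_simps)
    also have "exp ((1 - l) * (t * u i - t * U) + l * (t * v i - t * V)) \<le> (1 - l) * exp (t * u i - t * U) + l * exp (t * v i - t * V)"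
      using convex_onD[OF exp_convex, of l "t * u i - t * U" "t * v i - t * V"] l by simp
    finally show ?thesis unfolding E_def by (simp add: exp_diff)
  qed
  have "(\<Sum>i<n. exp (t * ((1 - l) * u i + l * v i))) \<le> (\<Sum>i<n. ((1 - l) * (exp (t * u i) / exp (t * U)) + l * (exp (t * v i) / exp (t * V))) * E)"
    by (intro sum_mono trm)
  also have "\<dots> = (\<Sum>i<n. ((1 - l) * E / exp (t * U)) * exp (t * u i) + (l * E / exp (t * V)) * exp (t * v i))"
    by (intro sum.cong) (auto simp: field_simps)
  also have "\<dots> = ((1 - l) * E / exp (t * U)) * (\<Sum>i<n. exp (t * u i)) + (l * E / exp (t * V)) * (\<Sum>i<n. exp (t * v i))"
    by (simp add: sum.distrib sum_distrib_left)
  also have "\<dots> = E" by (simp add: eU[symmetric] eV[symmetric] field_simps)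
  finally have "ln (\<Sum>i<n. exp (t * ((1 - l) * u i + l * v i))) \<le> ln E"
    using sum_exp_pos[OF n] by (subst ln_le_cancel_iff) (auto simp: E_def)
  also have "ln E = t * ((1 - l) * U + l * V)" by (simp add: E_def)
  finally have "(1 / t) * ln (\<Sum>i<n. exp (t * ((1 - l) * u i + l * v i))) \<le> (1 - l) * U + l * V"
    using t by (simp add: field_simps)
  then show ?thesis unfolding U_def V_def by (simp add: LSE_def)
qed

lemma LSE_deriv:
  fixes W :: "nat \<Rightarrow> real^'d"
  assumes t: "t > 0" and n: "n \<ge> 1"
  shows "((\<lambda>y. LSE n t (\<lambda>i. W i \<bullet> y + a i)) has_derivative
                        (\<lambda>h. softmax_approx n t W a x \<bullet> h)) (at x)"
proof -
  define S where "S = (\<Sum>i<n. exp (t * (W i \<bullet> x + a i)))"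
  have S: "S > 0" unfolding S_def using sum_exp_pos[OF n] .
  have "((\<lambda>y. (1 / t) * ln (\<Sum>i<n. exp (t * (W i \<bullet> y + a i)))) has_derivative
      (\<lambda>h. (1 / t) * ((\<Sum>i<n. exp (t * (W i \<bullet> x + a i)) * (t * (W i \<bullet> h))) / S))) (at x)"
    using S t unfolding S_def
    by (auto intro!: derivative_eq_intros ext simp: divide_inverse mult_ac)
  moreover have "(\<lambda>h. (1 / t) * ((\<Sum>i<n. exp (t * (W i \<bullet> x + a i)) * (t * (W i \<bullet> h))) / S)) = (\<lambda>h. softmax_approx n t W a x \<bullet> h)"
  proof (rule ext)
    fix h
    have "(1 / t) * ((\<Sum>i<n. exp (t * (W i \<bullet> x + a i)) * (t * (W i \<bullet> h))) / S) = (\<Sum>i<n. (exp (t * (W i \<bullet> x + a i)) / S) * (W i \<bullet> h))"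
      using t by (simp add: sum_divide_distrib sum_distrib_left field_simps)
    then show "(1 / t) * ((\<Sum>i<n. exp (t * (W i \<bullet> x + a i)) * (t * (W i \<bullet> h))) / S) = softmax_approx n t W a x \<bullet> h"
      by (simp add: softmax_approx_def softmax_def S_def inner_sum_left algebra_simps)
  qed
  ultimately show ?thesis by (simp add: LSE_def)
qed


lemma lin_inner: "linear (\<lambda>h. c \<bullet> (h::'a::real_inner))"
  by (simp add: bounded_linear.linear bounded_linear_inner_right)

lemma LSE_convex:
  fixes W :: "nat \<Rightarrow> real^'d"
  assumes t: "t > 0" and n: "n \<ge> 1"
  shows "convex_on UNIV (\<lambda>x. LSE n t (\<lambda>i. W i \<bullet> x + a i))"
proof (rule convex_onI)
  fix u :: real and x y :: "real^'d"
  assume u: "u > 0" "u < 1"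
  have e: "(\<lambda>i. W i \<bullet> ((1 - u) *\<^sub>R x + u *\<^sub>R y) + a i) = (\<lambda>i. (1 - u) * (W i \<bullet> x + a i) + u * (W i \<bullet> y + a i))"
    by (auto simp: inner_add_right algebra_simps)
  show "LSE n t (\<lambda>i. W i \<bullet> ((1 - u) *\<^sub>R x + u *\<^sub>R y) + a i) \<le> (1 - u) * LSE n t (\<lambda>i. W i \<bullet> x + a i) + u * LSE n t (\<lambda>i. W i \<bullet> y + a i)"
    unfolding e using LSE_convex_comb[OF t n, of u] u by simp
qed simp

theorem theorem1:
  fixes F :: "real^'d \<Rightarrow> real" and gradF :: "real^'d \<Rightarrow> real^'d" and \<delta> :: real
  assumes "\<delta> > 0"
    and "convex_on (closed_cube (-\<delta>) (1+\<delta>)) F"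
    and "continuous_on (closed_cube (-\<delta>) (1+\<delta>)) F"
    and "\<And>x. x \<in> open_cube (-\<delta>) (1+\<delta>) \<Longrightarrow>
           (F has_derivative (\<lambda>h. gradF x \<bullet> h)) (at x)"
    and "continuous_on (open_cube (-\<delta>) (1+\<delta>)) gradF"
  shows "(\<forall>\<epsilon>>0. \<exists>n::nat. \<exists>t::real. \<exists>W::nat \<Rightarrow> real^'d. \<exists>a::nat \<Rightarrow> real.
            n \<ge> 1 \<and> t > 0 \<and>
            (SUP x\<in>closed_cube 0 1. norm (gradF x - softmax_approx n t W a x)) < \<epsilon>)
       \<and> (\<forall>n::nat. \<forall>t::real. \<forall>W::nat \<Rightarrow> real^'d. \<forall>a::nat \<Rightarrow> real.
            n \<ge> 1 \<longrightarrow> t > 0 \<longrightarrow>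
              convex_on UNIV (\<lambda>x. LSE n t (\<lambda>i. W i \<bullet> x + a i))
            \<and> (\<forall>x. ((\<lambda>y. LSE n t (\<lambda>i. W i \<bullet> y + a i)) has_derivative
                        (\<lambda>h. softmax_approx n t W a x \<bullet> h)) (at x)))"
proof (intro conjI allI impI)
  fix n :: nat and t :: real and W :: "nat \<Rightarrow> real^'d" and a :: "nat \<Rightarrow> real" and x
  assume "n \<ge> 1" "t > 0"
  then show "convex_on UNIV (\<lambda>x. LSE n t (\<lambda>i. W i \<bullet> x + a i))"
    and "((\<lambda>y. LSE n t (\<lambda>i. W i \<bullet> y + a i)) has_derivative
                        (\<lambda>h. softmax_approx n t W a x \<bullet> h)) (at x)"
    using LSE_convex LSE_deriv by blast+
next
  fix \<epsilon> :: real assume e: "\<epsilon> > 0"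
  note d = assms(1)
  define G where "G = gradF"
  define Om where "Om = (open_cube (-\<delta>) (1+\<delta>) :: (real^'d) set)"
  define K where "K = (closed_cube (-\<delta>/2) (1+\<delta>/2) :: (real^'d) set)"
  define C where "C = (closed_cube 0 1 :: (real^'d) set)"
  have KOm: "K \<subseteq> Om"
  proof
    fix x assume "x \<in> K"
    then have xi: "\<And>i. -(\<delta>/2) \<le> x $ i \<and> x $ i \<le> 1 + \<delta>/2" by (auto simp: K_def closed_cube_def)
    have "-\<delta> < x $ i \<and> x $ i < 1 + \<delta>" for i using d xi[of i] by linarith
    then show "x \<in> Om" by (auto simp: Om_def open_cube_def)
  qed
  have OC: "Om \<subseteq> closed_cube (-\<delta>) (1+\<delta>)" by (auto simp: Om_def closed_cube_def open_cube_def less_imp_le)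
  have CK: "C \<subseteq> K"
  proof
    fix x assume "x \<in> C"
    then have xi: "\<And>i. 0 \<le> x $ i \<and> x $ i \<le> 1" by (auto simp: C_def closed_cube_def)
    have "-(\<delta>/2) \<le> x $ i \<and> x $ i \<le> 1 + \<delta>/2" for i using d xi[of i] by linarith
    then show "x \<in> K" by (auto simp: K_def closed_cube_def)
  qed
  have oOm: "open Om" by (simp add: Om_def cube_eq open_box)
  have cOm: "convex Om" by (simp add: Om_def cube_eq convex_box)
  have cK: "compact K" by (simp add: K_def cube_eq compact_cbox)
  have Fcv: "convex_on Om F" using convex_on_subset[OF assms(2) OC cOm] .
  have Fd: "\<And>y. y \<in> Om \<Longrightarrow> (F has_derivative (\<lambda>h. G y \<bullet> h)) (at y)"
    using assms(4) by (simp add: Om_def G_def)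
  have gradF_ineq: "F z \<ge> F y + G y \<bullet> (z - y)" if "y \<in> Om" "z \<in> Om" for y z
    using grad_ineq[OF Fcv oOm cOm that(1) that(2) Fd[OF that(1)] lin_inner] .
  have GcK: "continuous_on K G" using continuous_on_subset[OF assms(5)] KOm by (simp add: G_def Om_def)
  have FcK: "continuous_on K F" using continuous_on_subset[OF assms(3)] KOm OC by blast
  obtain r0 where r0: "r0 > 0" "\<And>x y. x \<in> K \<Longrightarrow> y \<in> K \<Longrightarrow> dist y x < r0 \<Longrightarrow> dist (G y) (G x) < \<epsilon>/2"
  proof -
    have "uniformly_continuous_on K G" by (rule compact_uniformly_continuous[OF GcK cK])
    then have "\<exists>d>0. \<forall>x\<in>K. \<forall>x'\<in>K. dist x' x < d \<longrightarrow> dist (G x') (G x) < \<epsilon>/2"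
      unfolding uniformly_continuous_on_def using e half_gt_zero by blast
    then show ?thesis using that by blast
  qed
  define r where "r = min (r0/2) (\<delta>/2)"
  have r: "r > 0" "r < r0" "r \<le> \<delta>/2" using r0 d by (auto simp: r_def)
  define \<eta> where "\<eta> = \<epsilon> * r / 8"
  have \<eta>: "\<eta> > 0" using e r by (simp add: \<eta>_def)
  obtain \<rho>1 where \<rho>1: "\<rho>1 > 0" "\<And>x y. x \<in> K \<Longrightarrow> y \<in> K \<Longrightarrow> dist y x < \<rho>1 \<Longrightarrow> dist (F y) (F x) < \<eta>/2"
  proof -
    have "uniformly_continuous_on K F" by (rule compact_uniformly_continuous[OF FcK cK])
    then have "\<exists>d>0. \<forall>x\<in>K. \<forall>x'\<in>K. dist x' x < d \<longrightarrow> dist (F x') (F x) < \<eta>/2"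
      unfolding uniformly_continuous_on_def using \<eta> half_gt_zero by blast
    then show ?thesis using that by blast
  qed
  obtain B where B: "B > 0" "\<And>y. y \<in> K \<Longrightarrow> norm (G y) \<le> B"
  proof -
    have "bounded (G ` K)" by (rule compact_imp_bounded[OF compact_continuous_image[OF GcK cK]])
    then obtain b where "b > 0" "\<forall>z\<in>G ` K. norm z \<le> b" unfolding bounded_pos by blast
    then show ?thesis using that by blast
  qed
  define \<rho> where "\<rho> = min \<rho>1 (\<eta> / (2 * B))"
  have \<rho>a: "\<rho> > 0" using \<rho>1 \<eta> B by (simp add: \<rho>_def)
  have \<rho>b: "\<rho> \<le> \<rho>1" "\<rho> \<le> \<eta> / (2 * B)" by (simp_all add: \<rho>_def)
  have "B * \<rho> \<le> B * (\<eta> / (2 * B))" using \<rho>b B by (intro mult_left_mono) auto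
  also have "\<dots> = \<eta> / 2" using B by simp
  finally have \<rho>c: "B * \<rho> \<le> \<eta>/2" .
  note \<rho> = \<rho>a \<rho>b(1) \<rho>c
  obtain N where N: "finite N" "N \<subseteq> K" "K \<subseteq> (\<Union>y\<in>N. ball y \<rho>)"
  proof -
    have "\<forall>e>0. \<exists>k. finite k \<and> k \<subseteq> K \<and> K \<subseteq> (\<Union>x\<in>k. ball x e)"
      by (rule seq_compact_imp_totally_bounded[OF compact_imp_seq_compact[OF cK]])
    then obtain k where "finite k \<and> k \<subseteq> K \<and> K \<subseteq> (\<Union>x\<in>k. ball x \<rho>)" using \<rho>a by auto
    then show ?thesis using that by auto
  qed
  obtain xs where xs: "set xs = N" using finite_list[OF N(1)] by blast
  have "vec 0 \<in> K" using d by (auto simp: K_def closed_cube_def)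
  then have "N \<noteq> {}" using N(3) by auto
  define n where "n = length xs"
  have n: "n \<ge> 1" using xs \<open>N \<noteq> {}\<close> by (cases xs) (auto simp: n_def)
  define y where "y i = xs ! i" for i
  have yK: "i < n \<Longrightarrow> y i \<in> K" for i using xs N(2) by (auto simp: y_def n_def)
  define W where "W i = G (y i)" for i
  define a where "a i = F (y i) - G (y i) \<bullet> y i" for i
  define t where "t = 8 * ln (real n) / (\<epsilon> * r) + 1"
  have lnn: "ln (real n) \<ge> 0" using n by simp
  have "8 * ln (real n) / (\<epsilon> * r) \<ge> 0" using lnn e r by simp
  then have t: "t > 0" by (simp add: t_def)
  have "\<eta> * t = ln (real n) + \<eta>" using e r by (simp add: t_def \<eta>_def field_simps)
  then have lnt: "ln (real n) / t \<le> \<eta>" using t \<eta> by (simp add: divide_le_eq)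
  define g where "g z = LSE n t (\<lambda>i. W i \<bullet> z + a i)" for z
  have lin: "W i \<bullet> z + a i = F (y i) + G (y i) \<bullet> (z - y i)" for i z
    by (simp add: W_def a_def inner_diff_right)
  have gup: "g z \<le> F z + \<eta>" if z: "z \<in> K" for z
  proof -
    have "g z \<le> F z + ln (real n) / t" unfolding g_def
    proof (rule LSE_le[OF t n])
      fix i assume "i < n"
      then show "W i \<bullet> z + a i \<le> F z" unfolding lin
        using gradF_ineq[of "y i" z] yK KOm z by auto
    qed
    then show ?thesis using lnt by simp
  qed
  have glo: "g z \<ge> F z - \<eta>" if z: "z \<in> K" for z
  proof -
    obtain yy where yy: "yy \<in> N" "dist yy z < \<rho>" using N(3) z by auto
    then obtain j where j: "j < n" "y j = yy" using xs by (auto simp: in_set_conv_nth y_def n_def)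
    have "W j \<bullet> z + a j \<le> g z" unfolding g_def by (rule LSE_ge[OF t j(1)])
    moreover have "\<bar>F yy - F z\<bar> < \<eta>/2" using \<rho>1(2)[of z yy] yy \<rho> N(2) z by (auto simp: dist_real_def)
    moreover have "\<bar>G yy \<bullet> (z - yy)\<bar> \<le> \<eta>/2"
    proof -
      have "\<bar>G yy \<bullet> (z - yy)\<bar> \<le> norm (G yy) * norm (z - yy)" by (rule Cauchy_Schwarz_ineq2)
      also have "\<dots> \<le> B * \<rho>"
        using B yy N(2) by (intro mult_mono) (auto simp: dist_norm norm_minus_commute)
      finally show ?thesis using \<rho> by simp
    qed
    ultimately show ?thesis unfolding lin j(2)[symmetric] by linarith
  qed
  define D where "D x = softmax_approx n t W a x" for x
  have gcv: "convex_on UNIV g" unfolding g_def by (rule LSE_convex[OF t n])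
  have gd: "(g has_derivative (\<lambda>h. D x \<bullet> h)) (at x)" for x
    unfolding g_def D_def by (rule LSE_deriv[OF t n])
  have main: "norm (G x - D x) \<le> 3 * \<epsilon> / 4" if x: "x \<in> C" for x
  proof (cases "D x = G x")
    case True then show ?thesis using e by simp
  next
    case False
    define v where "v = D x - G x"
    have nv: "norm v > 0" using False by (simp add: v_def)
    define h where "h = (r / norm v) *\<^sub>R v"
    have nh: "norm h = r" using nv r by (simp add: h_def)
    have xK: "x \<in> K" using x CK by auto
    have xhK: "x + h \<in> K"
    proof -
      have "\<bar>h $ i\<bar> \<le> \<delta>/2" for i using component_le_norm_cart[of h i] nh r by simp
      moreover have "\<And>i. 0 \<le> x $ i \<and> x $ i \<le> 1" using x by (auto simp: C_def closed_cube_def)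
      ultimately have "-(\<delta>/2) \<le> (x + h) $ i \<and> (x + h) $ i \<le> 1 + \<delta>/2" for i
        by (smt (verit) vector_add_component)
      then show ?thesis by (auto simp: K_def closed_cube_def)
    qed
    have "D x \<bullet> h \<le> g (x + h) - g x"
      using grad_ineq[where x=x and y="x + h", OF gcv open_UNIV convex_UNIV UNIV_I UNIV_I gd lin_inner] by simp
    also have "\<dots> \<le> F (x + h) - F x + 2 * \<eta>" using gup[OF xhK] glo[OF xK] by simp
    also have "F (x + h) - F x \<le> G (x + h) \<bullet> h"
    proof -
      have "F x \<ge> F (x + h) + G (x + h) \<bullet> (x - (x + h))" using gradF_ineq[of "x + h" x] xK xhK KOm by blast
      then show ?thesis by (simp add: inner_diff_right)
    qed
    also have "G (x + h) \<bullet> h = G x \<bullet> h + (G (x + h) - G x) \<bullet> h" by (simp add: inner_diff_left)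
    also have "(G (x + h) - G x) \<bullet> h \<le> norm (G (x + h) - G x) * norm h" by (rule norm_cauchy_schwarz)
    also have "\<dots> \<le> \<epsilon> / 2 * r"
    proof -
      have "dist (x + h) x < r0" using nh r by (simp add: dist_norm)
      then have "norm (G (x + h) - G x) < \<epsilon> / 2" using r0(2)[OF xK xhK] by (simp add: dist_norm)
      then show ?thesis using nh r by (simp add: mult_right_mono less_imp_le)
    qed
    finally have "v \<bullet> h \<le> \<epsilon> / 2 * r + 2 * \<eta>" by (simp add: v_def inner_diff_left)
    moreover have "v \<bullet> h = r * norm v" using nv by (simp add: h_def inner_scaleR_right dot_square_norm power2_eq_square)
    ultimately have "r * norm v \<le> r * (3 * \<epsilon> / 4)" by (simp add: \<eta>_def algebra_simps)
    then have "norm v \<le> 3 * \<epsilon> / 4" using r by simp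
    then show ?thesis by (simp add: v_def norm_minus_commute)
  qed
  have "C \<noteq> {}" by (auto simp: C_def closed_cube_def intro!: exI[of _ "vec 0"])
  then have "(SUP x\<in>C. norm (gradF x - softmax_approx n t W a x)) \<le> 3 * \<epsilon> / 4"
    using main by (intro cSUP_least) (auto simp: G_def D_def)
  then have "(SUP x\<in>C. norm (gradF x - softmax_approx n t W a x)) < \<epsilon>" using e by simp
  then show "\<exists>n::nat. \<exists>t::real. \<exists>W::nat \<Rightarrow> real^'d. \<exists>a::nat \<Rightarrow> real.
            n \<ge> 1 \<and> t > 0 \<and>
            (SUP x\<in>closed_cube 0 1. norm (gradF x - softmax_approx n t W a x)) < \<epsilon>"
    using n t unfolding C_def by blast
qed

end
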